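(* Let $\mathcal{X}=\{A\in\mathcal{M}_d: A=A^\dagger,\ \operatorname{tr}A=0\}$ with the basis consisting of $\sigma_x^{jk}=|j\rangle\langle k|+|k\rangle\langle j|$ and $\sigma_y^{jk}=-i(|j\rangle\langle k|-|k\rangle\langle j|)$ for $1\le j<k\le d$, and $\sigma_z^j=|j\rangle\langle j|-|j+1\rangle\langle j+1|$ for $j=1,\dots,d-1$, and let $\mathcal{V}=\{A\mapsto UAU^\dagger: U\in\mathcal{M}_d\text{ unitary}\}$. Then for every pair $B_1,B_2$ of these basis vectors there is $T\in\mathcal{V}$ with $T(B_1)=B_2$.
   Context: $\{|1\rangle,\dots,|d\rangle\}$ is the standard basis of $\mathbb{C}^d$. *)

theory Defs
  imports "Jordan_Normal_Form.Matrix" Complex_Main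
begin

text \<open>Indices are 0-based: the standard basis vector |j+1> of the paper corresponds to index j < d.\<close>

definition ketbra :: "nat \<Rightarrow> nat \<Rightarrow> nat \<Rightarrow> complex mat" where
  "ketbra d j k = mat d d (\<lambda>(a, b). if a = j \<and> b = k then 1 else 0)"

definition adj :: "complex mat \<Rightarrow> complex mat" where
  "adj A = mat (dim_col A) (dim_row A) (\<lambda>(i, j). cnj (A $$ (j, i)))"

definition unitary_mat :: "nat \<Rightarrow> complex mat \<Rightarrow> bool" where
  "unitary_mat d U \<longleftrightarrow> U \<in> carrier_mat d d \<and> U * adj U = 1\<^sub>m d \<and> adj U * U = 1\<^sub>m d"

definition sigma_x :: "nat \<Rightarrow> nat \<Rightarrow> nat \<Rightarrow> complex mat" where
  "sigma_x d j k = ketbra d j k + ketbra d k j"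

definition sigma_y :: "nat \<Rightarrow> nat \<Rightarrow> nat \<Rightarrow> complex mat" where
  "sigma_y d j k = (- \<i>) \<cdot>\<^sub>m (ketbra d j k - ketbra d k j)"

definition sigma_z :: "nat \<Rightarrow> nat \<Rightarrow> complex mat" where
  "sigma_z d j = ketbra d j j - ketbra d (Suc j) (Suc j)"

definition gm_basis :: "nat \<Rightarrow> complex mat set" where
  "gm_basis d = {sigma_x d j k | j k. j < k \<and> k < d}
              \<union> {sigma_y d j k | j k. j < k \<and> k < d}
              \<union> {sigma_z d j | j. Suc j < d}"

end

theory Submission
  imports Defs
begin


lemma dim_adj[simp]: "dim_row (adj A) = dim_col A" "dim_col (adj A) = dim_row A"
  by (auto simp: adj_def)
lemma index_adj[simp]: "i < dim_col A \<Longrightarrow> j < dim_row A \<Longrightarrow> adj A $$ (i,j) = cnj (A $$ (j,i))"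
  by (auto simp: adj_def)
lemma adj_carrier[simp]: "A \<in> carrier_mat n m \<Longrightarrow> adj A \<in> carrier_mat m n"
  by auto
lemma adj_adj[simp]: "adj (adj A) = A"
  by (rule eq_matI) auto
lemma adj_one[simp]: "adj (1\<^sub>m n) = 1\<^sub>m n"
  by (rule eq_matI) auto
lemma adj_mult: "A \<in> carrier_mat n m \<Longrightarrow> B \<in> carrier_mat m p \<Longrightarrow> adj (A * B) = adj B * adj A"
  apply (rule eq_matI)
  apply (auto simp: scalar_prod_def cnj_sum)
  apply (rule sum.cong, auto)
  done

definition ueq :: "nat \<Rightarrow> complex mat \<Rightarrow> complex mat \<Rightarrow> bool" where
  "ueq d A B \<longleftrightarrow> (\<exists>U. unitary_mat d U \<and> U * A * adj U = B)"

lemma ueq_refl: "A \<in> carrier_mat d d \<Longrightarrow> ueq d A A"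
  unfolding ueq_def unitary_mat_def by (rule exI[of _ "1\<^sub>m d"]) auto

lemma unitary_adj: "unitary_mat d U \<Longrightarrow> unitary_mat d (adj U)"
  unfolding unitary_mat_def by auto

lemma unitary_mult: assumes "unitary_mat d U" "unitary_mat d V" shows "unitary_mat d (V * U)"
proof -
  have c: "U \<in> carrier_mat d d" "V \<in> carrier_mat d d" "adj U \<in> carrier_mat d d" "adj V \<in> carrier_mat d d"
    using assms unfolding unitary_mat_def by auto
  have "V * U * adj (V * U) = V * (U * adj U) * adj V"
    using c by (simp add: adj_mult assoc_mult_mat[of _ d d _ d _ d] mult_carrier_mat[of _ d d _ d])
  also have "\<dots> = 1\<^sub>m d" using assms c unfolding unitary_mat_def by simp
  finally have 1: "V * U * adj (V * U) = 1\<^sub>m d" .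
  have "adj (V * U) * (V * U) = adj U * (adj V * V) * U"
    using c by (simp add: adj_mult assoc_mult_mat[of _ d d _ d _ d] mult_carrier_mat[of _ d d _ d])
  also have "\<dots> = 1\<^sub>m d" using assms c unfolding unitary_mat_def by simp
  finally show ?thesis using 1 c unfolding unitary_mat_def by auto
qed

lemma ueq_sym: assumes "A \<in> carrier_mat d d" "ueq d A B" shows "ueq d B A"
proof -
  obtain U where u: "unitary_mat d U" "U * A * adj U = B" using assms unfolding ueq_def by auto
  have c: "U \<in> carrier_mat d d" "adj U \<in> carrier_mat d d" using u unfolding unitary_mat_def by auto
  have "adj U * B * adj (adj U) = (adj U * U) * A * (adj U * U)"
    using c assms(1) u(2)[symmetric] by (simp add: assoc_mult_mat[of _ d d _ d _ d] mult_carrier_mat[of _ d d _ d])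
  also have "\<dots> = A" using u assms(1) unfolding unitary_mat_def by simp
  finally show ?thesis using unitary_adj[OF u(1)] unfolding ueq_def by blast
qed

lemma ueq_trans: assumes "A \<in> carrier_mat d d" "ueq d A B" "ueq d B C" shows "ueq d A C"
proof -
  obtain U where u: "unitary_mat d U" "U * A * adj U = B" using assms unfolding ueq_def by auto
  obtain V where v: "unitary_mat d V" "V * B * adj V = C" using assms unfolding ueq_def by auto
  have c: "U \<in> carrier_mat d d" "adj U \<in> carrier_mat d d" "V \<in> carrier_mat d d" "adj V \<in> carrier_mat d d"
    using u v unfolding unitary_mat_def by auto
  have "(V * U) * A * adj (V * U) = V * (U * A * adj U) * adj V"
    using c assms(1) by (simp add: adj_mult assoc_mult_mat[of _ d d _ d _ d] mult_carrier_mat[of _ d d _ d])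
  then show ?thesis using u v unitary_mult[OF u(1) v(1)] unfolding ueq_def by auto
qed


lemma mult_mat_mat: "mat d d f * mat d d g = mat d d (\<lambda>(i,j). \<Sum>c\<in>{0..<d}. f(i,c)*g(c,j))"
  by (rule eq_matI) (auto simp: scalar_prod_def)

lemma adj_mat: "adj (mat d d f) = mat d d (\<lambda>(i,j). cnj (f(j,i)))"
  by (rule eq_matI) auto

lemma one_mat_eq: "1\<^sub>m d = mat d d (\<lambda>(i,j). if i = j then 1 else 0)"
  by (rule eq_matI) auto

definition pm :: "nat \<Rightarrow> (nat \<Rightarrow> nat) \<Rightarrow> complex mat" where
  "pm d s = mat d d (\<lambda>(a,b). if a = s b then 1 else 0)"

lemma pm_row: fixes d :: nat assumes s: "\<forall>x<d. s x < d \<and> s (s x) = x" and "a < d"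
  shows "(\<Sum>c\<in>{0..<d}. (if a = s c then 1 else 0) * g c) = (g (s a) :: complex)"
proof -
  have "(\<Sum>c\<in>{0..<d}. (if a = s c then 1 else 0) * g c) = (\<Sum>c\<in>{0..<d}. if c = s a then g c else 0)"
    apply (rule sum.cong, simp) using s assms(2) by auto
  also have "\<dots> = g (s a)"
  proof -
    have "s a \<in> {0..<d}" using s assms(2) by auto
    then show ?thesis by (simp add: sum.delta)
  qed
  finally show ?thesis .
qed

lemma pm_col: fixes d :: nat assumes s: "\<forall>x<d. s x < d \<and> s (s x) = x" and "a < d"
  shows "(\<Sum>c\<in>{0..<d}. g c * cnj (if a = s c then 1 else 0)) = (g (s a) :: complex)"
proof -
  have "(\<Sum>c\<in>{0..<d}. g c * cnj (if a = s c then 1 else 0)) = (\<Sum>c\<in>{0..<d}. (if a = s c then 1 else 0) * g c)"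
    by (rule sum.cong) auto
  then show ?thesis using pm_row[OF assms] by simp
qed

lemma delta_sum: fixes d x y :: nat assumes "x < d" shows "(\<Sum>c\<in>{0..<d}. cnj (if c = x then 1 else 0) * (if c = y then 1 else 0)) = (if x = y then 1 else (0::complex))"
proof -
  have "(\<Sum>c\<in>{0..<d}. cnj (if c = x then 1 else 0) * (if c = y then 1 else 0)) = (\<Sum>c\<in>{0..<d}. if c = x then (if x = y then 1 else (0::complex)) else 0)"
    by (rule sum.cong) auto
  also have "\<dots> = (if x = y then 1 else 0)"
    using assms by (cases "x = y") (simp_all add: sum.delta)
  finally show ?thesis .
qed

lemma pm_unitary: assumes s: "\<forall>x<d. s x < d \<and> s (s x) = x" shows "unitary_mat d (pm d s)"
proof -
  have inj: "\<And>i j. i < d \<Longrightarrow> j < d \<Longrightarrow> s i = s j \<Longrightarrow> i = j" using s by metis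
  have 1: "pm d s * adj (pm d s) = 1\<^sub>m d"
    unfolding pm_def adj_mat mult_mat_mat one_mat_eq
    apply (rule eq_matI) using s by (auto simp: pm_row[OF s])
  have 2: "adj (pm d s) * pm d s = 1\<^sub>m d"
    unfolding pm_def adj_mat mult_mat_mat one_mat_eq
    apply (rule eq_matI) using s inj by (auto simp: delta_sum)
  show ?thesis using 1 2 unfolding unitary_mat_def pm_def by auto
qed

lemma pm_conj: assumes s: "\<forall>x<d. s x < d \<and> s (s x) = x"
  shows "pm d s * mat d d f * adj (pm d s) = mat d d (\<lambda>(a,b). f (s a, s b))"
  unfolding pm_def adj_mat mult_mat_mat
  apply (rule eq_matI) using s by (auto simp: pm_row[OF s] pm_col[OF s])


lemma ueq_pm: fixes d :: nat assumes s: "\<forall>x<d. s x < d \<and> s (s x) = x"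
  shows "ueq d (mat d d f) (mat d d (\<lambda>(a,b). f (s a, s b)))"
  unfolding ueq_def using pm_unitary[OF s] pm_conj[OF s] by blast

lemma inv_eq: fixes d :: nat assumes s: "\<forall>x<d. s x < d \<and> s (s x) = x" and "a < d" "j < d"
  shows "(s a = j) = (a = s j)"
  using assms by metis

lemma sx_mat: "sigma_x d j k = mat d d (\<lambda>(a,b). (if a=j\<and>b=k then 1 else 0) + (if a=k\<and>b=j then 1 else 0))"
  by (rule eq_matI) (auto simp: sigma_x_def ketbra_def)
lemma sy_mat: "sigma_y d j k = mat d d (\<lambda>(a,b). - \<i> * ((if a=j\<and>b=k then 1 else 0) - (if a=k\<and>b=j then 1 else 0)))"
  by (rule eq_matI) (auto simp: sigma_y_def ketbra_def)
definition sz :: "nat \<Rightarrow> nat \<Rightarrow> nat \<Rightarrow> complex mat" where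
  "sz d j k = mat d d (\<lambda>(a,b). (if a=j\<and>b=j then 1 else 0) - (if a=k\<and>b=k then 1 else 0))"
lemma sigma_z_sz: "sigma_z d j = sz d j (Suc j)"
  by (rule eq_matI) (auto simp: sigma_z_def sz_def ketbra_def)

definition sw :: "nat \<Rightarrow> nat \<Rightarrow> nat \<Rightarrow> nat" where
  "sw a b x = (if x = a then b else if x = b then a else x)"

lemma sw_ok: "a < d \<Longrightarrow> b < d \<Longrightarrow> \<forall>x<d. sw a b x < d \<and> sw a b (sw a b x) = x"
  by (auto simp: sw_def)



lemma perm_gen: fixes d :: nat assumes s: "\<forall>x<d. s x < d \<and> s (s x) = x"
  and "\<And>a b. a < d \<Longrightarrow> b < d \<Longrightarrow> f (s a, s b) = g (a, b)"
  shows "ueq d (mat d d f) (mat d d g)"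
proof -
  have "mat d d (\<lambda>(a,b). f (s a, s b)) = mat d d g"
    by (rule eq_matI) (simp_all add: assms(2))
  with ueq_pm[OF s] show ?thesis by metis
qed

lemma perm_x: fixes d :: nat assumes s: "\<forall>x<d. s x < d \<and> s (s x) = x" and "j < d" "k < d"
  shows "ueq d (sigma_x d j k) (sigma_x d (s j) (s k))"
  unfolding sx_mat
proof (rule perm_gen[OF s])
  fix a b assume "a < d" "b < d"
  then have h: "(s a = j) = (a = s j)" "(s a = k) = (a = s k)" "(s b = j) = (b = s j)" "(s b = k) = (b = s k)"
    using inv_eq[OF s] assms by blast+
  show "(\<lambda>(a,b). (if a=j\<and>b=k then 1 else 0) + (if a=k\<and>b=j then 1 else (0::complex))) (s a, s b) =
    (\<lambda>(a,b). (if a=s j\<and>b=s k then 1 else 0) + (if a=s k\<and>b=s j then 1 else (0::complex))) (a, b)"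
    by (simp only: h prod.case)
qed

lemma perm_y: fixes d :: nat assumes s: "\<forall>x<d. s x < d \<and> s (s x) = x" and "j < d" "k < d"
  shows "ueq d (sigma_y d j k) (sigma_y d (s j) (s k))"
  unfolding sy_mat
proof (rule perm_gen[OF s])
  fix a b assume "a < d" "b < d"
  then have h: "(s a = j) = (a = s j)" "(s a = k) = (a = s k)" "(s b = j) = (b = s j)" "(s b = k) = (b = s k)"
    using inv_eq[OF s] assms by blast+
  show "(\<lambda>(a,b). - \<i> * ((if a=j\<and>b=k then 1 else 0) - (if a=k\<and>b=j then 1 else 0))) (s a, s b) =
    (\<lambda>(a,b). - \<i> * ((if a=s j\<and>b=s k then 1 else 0) - (if a=s k\<and>b=s j then 1 else 0))) (a, b)"
    by (simp only: h prod.case)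
qed

lemma perm_z: fixes d :: nat assumes s: "\<forall>x<d. s x < d \<and> s (s x) = x" and "j < d" "k < d"
  shows "ueq d (sz d j k) (sz d (s j) (s k))"
  unfolding sz_def
proof (rule perm_gen[OF s])
  fix a b assume "a < d" "b < d"
  then have h: "(s a = j) = (a = s j)" "(s a = k) = (a = s k)" "(s b = j) = (b = s j)" "(s b = k) = (b = s k)"
    using inv_eq[OF s] assms by blast+
  show "(\<lambda>(a,b). (if a=j\<and>b=j then 1 else 0) - (if a=k\<and>b=k then 1 else (0::complex))) (s a, s b) =
    (\<lambda>(a,b). (if a=s j\<and>b=s j then 1 else 0) - (if a=s k\<and>b=s k then 1 else (0::complex))) (a, b)"
    by (simp only: h prod.case)
qed



lemma sum_lt2: fixes d :: nat assumes "2 \<le> d" "\<And>c. 2 \<le> c \<Longrightarrow> g c = (0::complex)"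
  shows "(\<Sum>c\<in>{0..<d}. g c) = g 0 + g 1"
proof -
  have "(\<Sum>c\<in>{0..<d}. g c) = (\<Sum>c\<in>{0..<2}. g c)"
    by (rule sum.mono_neutral_right) (use assms in auto)
  also have "\<dots> = g 0 + g 1" by (simp add: numeral_2_eq_2)
  finally show ?thesis .
qed

definition bw :: "(nat \<Rightarrow> nat \<Rightarrow> complex) \<Rightarrow> nat \<times> nat \<Rightarrow> complex" where
  "bw w = (\<lambda>(a,b). if a < 2 \<and> b < 2 then w a b else if a = b then 1 else 0)"

lemma bm_conj: fixes d :: nat assumes d: "2 \<le> d" and f: "\<And>a b. 2 \<le> a \<or> 2 \<le> b \<Longrightarrow> f (a,b) = 0"
  shows "mat d d (bw w) * mat d d f * adj (mat d d (bw w)) =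
    mat d d (\<lambda>(a,b). if a < 2 \<and> b < 2 then
       (w a 0 * f (0,0) + w a 1 * f (1,0)) * cnj (w b 0) + (w a 0 * f (0,1) + w a 1 * f (1,1)) * cnj (w b 1)
      else 0)"
  unfolding mult_mat_mat adj_mat
  apply (rule eq_matI)
  subgoal for a b
  proof -
    assume "a < dim_row (mat d d (\<lambda>(a,b). if a < 2 \<and> b < 2 then
       (w a 0 * f (0,0) + w a 1 * f (1,0)) * cnj (w b 0) + (w a 0 * f (0,1) + w a 1 * f (1,1)) * cnj (w b 1)
      else 0))" "b < dim_col (mat d d (\<lambda>(a,b). if a < 2 \<and> b < 2 then
       (w a 0 * f (0,0) + w a 1 * f (1,0)) * cnj (w b 0) + (w a 0 * f (0,1) + w a 1 * f (1,1)) * cnj (w b 1)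
      else 0))"
    then have ab: "a < d" "b < d" by auto
    have inner: "(\<Sum>e\<in>{0..<d}. bw w (a,e) * f (e,c)) = bw w (a,0) * f (0,c) + bw w (a,1) * f (1,c)" for c
      by (rule sum_lt2[OF d]) (simp add: f)
    have "(\<Sum>c\<in>{0..<d}. (\<Sum>e\<in>{0..<d}. bw w (a,e) * f (e,c)) * cnj (bw w (b,c)))
       = (\<Sum>c\<in>{0..<d}. (bw w (a,0) * f (0,c) + bw w (a,1) * f (1,c)) * cnj (bw w (b,c)))"
      by (simp add: inner)
    also have "\<dots> = (bw w (a,0) * f (0,0) + bw w (a,1) * f (1,0)) * cnj (bw w (b,0))
       + (bw w (a,0) * f (0,1) + bw w (a,1) * f (1,1)) * cnj (bw w (b,1))"
      by (rule sum_lt2[OF d]) (simp add: f)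
    also have "\<dots> = (if a < 2 \<and> b < 2 then
         (w a 0 * f (0,0) + w a 1 * f (1,0)) * cnj (w b 0) + (w a 0 * f (0,1) + w a 1 * f (1,1)) * cnj (w b 1)
        else 0)"
      by (auto simp: bw_def)
    finally show ?thesis using ab by simp
  qed
  by auto




lemma delta_l: fixes d :: nat assumes "a < d" shows "(\<Sum>c\<in>{0..<d}. (if c = a then 1 else 0) * g c) = (g a :: complex)"
proof -
  have "(\<Sum>c\<in>{0..<d}. (if c = a then 1 else 0) * g c) = (\<Sum>c\<in>{0..<d}. if c = a then g c else 0)"
    by (rule sum.cong) auto
  then show ?thesis using assms by (simp add: sum.delta)
qed

lemma delta_r: fixes d :: nat assumes "a < d" shows "(\<Sum>c\<in>{0..<d}. g c * (if c = a then 1 else 0)) = (g a :: complex)"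
  using delta_l[OF assms, of g] by (simp add: mult.commute)

lemma cnj_ind[simp]: "cnj (if P then 1 else 0) = (if P then 1 else 0)" by simp

lemma bw_big: "2 \<le> a \<Longrightarrow> bw w (a, c) = (if c = a then 1 else 0)"
  "2 \<le> a \<Longrightarrow> bw w (c, a) = (if c = a then 1 else 0)"
  by (auto simp: bw_def)

lemma bm_unitary: fixes d :: nat assumes d: "2 \<le> d"
  and u1: "\<And>a b. a < 2 \<Longrightarrow> b < 2 \<Longrightarrow> w a 0 * cnj (w b 0) + w a 1 * cnj (w b 1) = (if a = b then 1 else 0)"
  and u2: "\<And>a b. a < 2 \<Longrightarrow> b < 2 \<Longrightarrow> cnj (w 0 a) * w 0 b + cnj (w 1 a) * w 1 b = (if a = b then 1 else 0)"
  shows "unitary_mat d (mat d d (bw w))"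
proof -
  have 1: "(\<Sum>c\<in>{0..<d}. bw w (a,c) * cnj (bw w (b,c))) = (if a = b then 1 else 0)" if ab: "a < d" "b < d" for a b
  proof (cases "2 \<le> a")
    case True
    then show ?thesis using ab by (simp add: bw_big delta_l; auto simp: bw_def)
  next
    case a: False
    show ?thesis
    proof (cases "2 \<le> b")
      case True
      then show ?thesis using ab a by (simp add: bw_big delta_r; auto simp: bw_def)
    next
      case False
      have "(\<Sum>c\<in>{0..<d}. bw w (a,c) * cnj (bw w (b,c))) = bw w (a,0) * cnj (bw w (b,0)) + bw w (a,1) * cnj (bw w (b,1))"
        by (rule sum_lt2[OF d]) (use a in \<open>auto simp: bw_def\<close>)
      also have "\<dots> = (if a = b then 1 else 0)" using a False u1[of a b] by (simp add: bw_def)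
      finally show ?thesis .
    qed
  qed
  have 2: "(\<Sum>c\<in>{0..<d}. cnj (bw w (c,a)) * bw w (c,b)) = (if a = b then 1 else 0)" if ab: "a < d" "b < d" for a b
  proof (cases "2 \<le> a")
    case True
    then show ?thesis using ab by (simp add: bw_big delta_l; auto simp: bw_def)
  next
    case a: False
    show ?thesis
    proof (cases "2 \<le> b")
      case True
      then show ?thesis using ab a by (simp add: bw_big delta_r; auto simp: bw_def)
    next
      case False
      have "(\<Sum>c\<in>{0..<d}. cnj (bw w (c,a)) * bw w (c,b)) = cnj (bw w (0,a)) * bw w (0,b) + cnj (bw w (1,a)) * bw w (1,b)"
        by (rule sum_lt2[OF d]) (use a in \<open>auto simp: bw_def\<close>)
      also have "\<dots> = (if a = b then 1 else 0)" using a False u2[of a b] by (simp add: bw_def)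
      finally show ?thesis .
    qed
  qed
  have "mat d d (bw w) * adj (mat d d (bw w)) = 1\<^sub>m d"
    unfolding mult_mat_mat adj_mat one_mat_eq by (rule eq_matI) (simp_all add: 1)
  moreover have "adj (mat d d (bw w)) * mat d d (bw w) = 1\<^sub>m d"
    unfolding mult_mat_mat adj_mat one_mat_eq by (rule eq_matI) (simp_all add: 2)
  ultimately show ?thesis unfolding unitary_mat_def by auto
qed




lemma lt2: "(a::nat) < 2 \<Longrightarrow> a = 0 \<or> a = 1" by auto

definition hc :: complex where "hc = complex_of_real (1 / sqrt 2)"

lemma hh: "hc * hc = 1/2"
proof -
  have "(1 / sqrt 2) * (1 / sqrt 2) = (1/2::real)" by (simp add: field_simps)
  then show ?thesis unfolding hc_def by (metis of_real_mult of_real_divide of_real_1 of_real_numeral)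
qed
lemma cnj_hc[simp]: "cnj hc = hc" unfolding hc_def by simp

definition hw :: "nat \<Rightarrow> nat \<Rightarrow> complex" where
  "hw a b = (if a = 1 \<and> b = 1 then - hc else hc)"

lemma hw_unitary: "2 \<le> d \<Longrightarrow> unitary_mat d (mat d d (bw hw))"
  by (rule bm_unitary) (auto dest!: lt2 simp: hw_def hh)

lemma x01_z: assumes d: "2 \<le> d" shows "ueq d (sigma_x d 0 1) (sz d 0 1)"
proof -
  have "mat d d (bw hw) * sigma_x d 0 1 * adj (mat d d (bw hw)) = sz d 0 1"
    unfolding sx_mat
    apply (subst bm_conj[OF d])
     apply auto[1]
    unfolding sz_def
    by (rule eq_matI) (auto dest!: lt2 simp: hw_def hh)
  then show ?thesis unfolding ueq_def using hw_unitary[OF d] by blast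
qed

definition sw2 :: "nat \<Rightarrow> nat \<Rightarrow> complex" where
  "sw2 a b = (if a = b then (if a = 0 then 1 else \<i>) else 0)"

lemma sw2_unitary: "2 \<le> d \<Longrightarrow> unitary_mat d (mat d d (bw sw2))"
  by (rule bm_unitary) (auto dest!: lt2 simp: sw2_def)

lemma x01_y: assumes d: "2 \<le> d" shows "ueq d (sigma_x d 0 1) (sigma_y d 0 1)"
proof -
  have "mat d d (bw sw2) * sigma_x d 0 1 * adj (mat d d (bw sw2)) = sigma_y d 0 1"
    unfolding sx_mat
    apply (subst bm_conj[OF d])
     apply auto[1]
    unfolding sy_mat
    by (rule eq_matI) (auto dest!: lt2 simp: sw2_def)
  then show ?thesis unfolding ueq_def using sw2_unitary[OF d] by blast
qed




lemma car_x[simp]: "sigma_x d j k \<in> carrier_mat d d" by (simp add: sx_mat)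
lemma car_y[simp]: "sigma_y d j k \<in> carrier_mat d d" by (simp add: sy_mat)
lemma car_z[simp]: "sz d j k \<in> carrier_mat d d" by (simp add: sz_def)

lemma two_steps: assumes "j < k" "k < d"
  shows "sw 1 k (sw 0 j j) = 0" "sw 1 k (sw 0 j k) = 1"
    "\<forall>x<d. sw 0 j x < d \<and> sw 0 j (sw 0 j x) = x" "\<forall>x<d. sw 1 k x < d \<and> sw 1 k (sw 1 k x) = x"
  using assms by (auto simp: sw_def)

lemma basis_x: assumes "j < k" "k < d" shows "ueq d (sigma_x d j k) (sz d 0 1)"
proof -
  note t = two_steps[OF assms]
  have d: "2 \<le> d" using assms by auto
  have 1: "ueq d (sigma_x d j k) (sigma_x d (sw 0 j j) (sw 0 j k))" by (rule perm_x[OF t(3)]) (use assms in auto)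
  have 2: "ueq d (sigma_x d (sw 0 j j) (sw 0 j k)) (sigma_x d 0 1)"
    using perm_x[OF t(4), of "sw 0 j j" "sw 0 j k"] t(1,2) t(3) assms by auto
  show ?thesis using ueq_trans[OF _ ueq_trans[OF _ 1 2] x01_z[OF d]] by simp
qed

lemma basis_y: assumes "j < k" "k < d" shows "ueq d (sigma_y d j k) (sz d 0 1)"
proof -
  note t = two_steps[OF assms]
  have d: "2 \<le> d" using assms by auto
  have 1: "ueq d (sigma_y d j k) (sigma_y d (sw 0 j j) (sw 0 j k))" by (rule perm_y[OF t(3)]) (use assms in auto)
  have 2: "ueq d (sigma_y d (sw 0 j j) (sw 0 j k)) (sigma_y d 0 1)"
    using perm_y[OF t(4), of "sw 0 j j" "sw 0 j k"] t(1,2) t(3) assms by auto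
  have 3: "ueq d (sigma_y d 0 1) (sigma_x d 0 1)" by (rule ueq_sym[OF _ x01_y[OF d]]) simp
  show ?thesis using ueq_trans[OF _ ueq_trans[OF _ ueq_trans[OF _ 1 2] 3] x01_z[OF d]] by simp
qed

lemma basis_z: assumes "j < k" "k < d" shows "ueq d (sz d j k) (sz d 0 1)"
proof -
  note t = two_steps[OF assms]
  have 1: "ueq d (sz d j k) (sz d (sw 0 j j) (sw 0 j k))" by (rule perm_z[OF t(3)]) (use assms in auto)
  have 2: "ueq d (sz d (sw 0 j j) (sw 0 j k)) (sz d 0 1)"
    using perm_z[OF t(4), of "sw 0 j j" "sw 0 j k"] t(1,2) t(3) assms by auto
  show ?thesis using ueq_trans[OF _ 1 2] by simp
qed

lemma basis_all: "B \<in> gm_basis d \<Longrightarrow> ueq d B (sz d 0 1) \<and> B \<in> carrier_mat d d"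
  unfolding gm_basis_def using basis_x basis_y basis_z[of j "Suc j" d for j]
  by (auto simp: sigma_z_sz)

theorem lemma2:
  fixes d :: nat
  assumes "B1 \<in> gm_basis d" and "B2 \<in> gm_basis d"
  shows "\<exists>U. unitary_mat d U \<and> U * B1 * adj U = B2"
proof -
  have "ueq d B1 B2"
    using basis_all[OF assms(1)] basis_all[OF assms(2)] ueq_trans ueq_sym by (metis car_z)
  then show ?thesis unfolding ueq_def .
qed


end
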